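(* Among the triangle centers $X_1,\dots,X_{29}$, exactly $X_{16}$, $X_{23}$, $X_{26}$ have the property that there exists an acute triangle $ABC$ with $a<b<c$ in which $\mathrm{Atrace}(X_n)$ lies on the extension of $BC$ beyond $C$. For every other $n\le 29$, in every acute triangle with $a<b<c$, $\mathrm{Atrace}(X_n)$ does not lie on the extension of $BC$ beyond $C$.
   Context: $X_n$ denotes the $n$-th triangle center listed in Kimberling's Encyclopedia of Triangle Centers (ETC), given by barycentric coordinates in terms of $a=BC$, $b=CA$, $c=AB$. For a point $P=(p:q:r)\ne A$, $\mathrm{Atrace}(P)$ is the intersection of line $AP$ with line $BC$, namely $(0:q:r)$; it lies on the extension of $BC$ beyond $C$ iff $q(q+r)<0$. *)

theory Defs
  imports Complex_Main
begin

text \<open>Triangle with side lengths a = BC, b = CA, c = AB.  The angle opposite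
  the side of length x (the other two sides being y, z), via the law of cosines.\<close>
definition ang :: "real \<Rightarrow> real \<Rightarrow> real \<Rightarrow> real" where
  "ang x y z = arccos ((y^2 + z^2 - x^2) / (2 * y * z))"

text \<open>A triangle center with first barycentric coordinate f(a,b,c) is the point
  (f(a,b,c) : f(b,c,a) : f(c,a,b)).  Below, X_n a b c is that first coordinate,
  taken from ETC (trigonometric trilinears t(A,B,C) are converted to barycentrics
  by multiplying with a).  Inside X_n a b c:  A = ang a b c, B = ang b c a, C = ang c a b.\<close>

definition X1 :: "real \<Rightarrow> real \<Rightarrow> real \<Rightarrow> real" where "X1 a b c = a"
definition X2 :: "real \<Rightarrow> real \<Rightarrow> real \<Rightarrow> real" where "X2 a b c = 1"
definition X3 :: "real \<Rightarrow> real \<Rightarrow> real \<Rightarrow> real" where "X3 a b c = a^2 * (b^2 + c^2 - a^2)"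
definition X4 :: "real \<Rightarrow> real \<Rightarrow> real \<Rightarrow> real" where "X4 a b c = 1 / (b^2 + c^2 - a^2)"
definition X5 :: "real \<Rightarrow> real \<Rightarrow> real \<Rightarrow> real" where
  "X5 a b c = a * cos (ang b c a - ang c a b)"
definition X6 :: "real \<Rightarrow> real \<Rightarrow> real \<Rightarrow> real" where "X6 a b c = a^2"
definition X7 :: "real \<Rightarrow> real \<Rightarrow> real \<Rightarrow> real" where "X7 a b c = 1 / (b + c - a)"
definition X8 :: "real \<Rightarrow> real \<Rightarrow> real \<Rightarrow> real" where "X8 a b c = b + c - a"
definition X9 :: "real \<Rightarrow> real \<Rightarrow> real \<Rightarrow> real" where "X9 a b c = a * (b + c - a)"
definition X10 :: "real \<Rightarrow> real \<Rightarrow> real \<Rightarrow> real" where "X10 a b c = b + c"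
definition X11 :: "real \<Rightarrow> real \<Rightarrow> real \<Rightarrow> real" where "X11 a b c = (b + c - a) * (b - c)^2"
definition X12 :: "real \<Rightarrow> real \<Rightarrow> real \<Rightarrow> real" where "X12 a b c = (b + c)^2 / (b + c - a)"
definition X13 :: "real \<Rightarrow> real \<Rightarrow> real \<Rightarrow> real" where
  "X13 a b c = a / sin (ang a b c + pi / 3)"
definition X14 :: "real \<Rightarrow> real \<Rightarrow> real \<Rightarrow> real" where
  "X14 a b c = a / sin (ang a b c - pi / 3)"
definition X15 :: "real \<Rightarrow> real \<Rightarrow> real \<Rightarrow> real" where
  "X15 a b c = a * sin (ang a b c + pi / 3)"
definition X16 :: "real \<Rightarrow> real \<Rightarrow> real \<Rightarrow> real" where
  "X16 a b c = a * sin (ang a b c - pi / 3)"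
definition X17 :: "real \<Rightarrow> real \<Rightarrow> real \<Rightarrow> real" where
  "X17 a b c = a / sin (ang a b c + pi / 6)"
definition X18 :: "real \<Rightarrow> real \<Rightarrow> real \<Rightarrow> real" where
  "X18 a b c = a / sin (ang a b c - pi / 6)"
definition X19 :: "real \<Rightarrow> real \<Rightarrow> real \<Rightarrow> real" where
  "X19 a b c = a * tan (ang a b c)"
definition X20 :: "real \<Rightarrow> real \<Rightarrow> real \<Rightarrow> real" where
  "X20 a b c = a * (cos (ang a b c) - cos (ang b c a) * cos (ang c a b))"
definition X21 :: "real \<Rightarrow> real \<Rightarrow> real \<Rightarrow> real" where
  "X21 a b c = a / (cos (ang b c a) + cos (ang c a b))"
definition X22 :: "real \<Rightarrow> real \<Rightarrow> real \<Rightarrow> real" where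
  "X22 a b c = a^2 * (b^4 + c^4 - a^4)"
definition X23 :: "real \<Rightarrow> real \<Rightarrow> real \<Rightarrow> real" where
  "X23 a b c = a^2 * (b^4 + c^4 - a^4 - b^2 * c^2)"
definition X24 :: "real \<Rightarrow> real \<Rightarrow> real \<Rightarrow> real" where
  "X24 a b c = a * cos (2 * ang a b c) / cos (ang a b c)"
definition X25 :: "real \<Rightarrow> real \<Rightarrow> real \<Rightarrow> real" where
  "X25 a b c = a * sin (ang a b c) * tan (ang a b c)"
definition X26 :: "real \<Rightarrow> real \<Rightarrow> real \<Rightarrow> real" where
  "X26 a b c = a * (a * (b^2 * cos (2 * ang b c a) + c^2 * cos (2 * ang c a b)
                          - a^2 * cos (2 * ang a b c)))"
definition X27 :: "real \<Rightarrow> real \<Rightarrow> real \<Rightarrow> real" where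
  "X27 a b c = a / (cos (ang a b c) * (b + c))"
definition X28 :: "real \<Rightarrow> real \<Rightarrow> real \<Rightarrow> real" where
  "X28 a b c = a * tan (ang a b c) / (b + c)"
definition X29 :: "real \<Rightarrow> real \<Rightarrow> real \<Rightarrow> real" where
  "X29 a b c = a / (cos (ang a b c) * (cos (ang b c a) + cos (ang c a b)))"

definition ETC :: "nat \<Rightarrow> real \<Rightarrow> real \<Rightarrow> real \<Rightarrow> real" where
  "ETC n = [X1, X2, X3, X4, X5, X6, X7, X8, X9, X10, X11, X12, X13, X14, X15, X16, X17,
            X18, X19, X20, X21, X22, X23, X24, X25, X26, X27, X28, X29] ! (n - 1)"

text \<open>Atrace of the center with first barycentric f is (0 : q : r) with q = f(b,c,a),
  r = f(c,a,b); it lies on the extension of BC beyond C iff q(q+r) < 0.\<close>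
definition atrace_beyond_C :: "(real \<Rightarrow> real \<Rightarrow> real \<Rightarrow> real) \<Rightarrow> real \<Rightarrow> real \<Rightarrow> real \<Rightarrow> bool" where
  "atrace_beyond_C f a b c \<longleftrightarrow> (let q = f b c a; r = f c a b in q * (q + r) < 0)"

definition acute_abc :: "real \<Rightarrow> real \<Rightarrow> real \<Rightarrow> bool" where
  "acute_abc a b c \<longleftrightarrow> 0 < a \<and> 0 < b \<and> 0 < c \<and> a < b + c \<and> b < c + a \<and> c < a + b
     \<and> a^2 < b^2 + c^2 \<and> b^2 < c^2 + a^2 \<and> c^2 < a^2 + b^2 \<and> a < b \<and> b < c"

end

theory Submission
  imports Defs
begin

lemma cos_ang:
  assumes "0<y" "0<z" "x < y+z" "y < z+x" "z < x+y" "0 < x"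
  shows "cos (ang x y z) = (y^2+z^2-x^2)/(2*y*z)"
    and "-1 < (y^2+z^2-x^2)/(2*y*z)" and "(y^2+z^2-x^2)/(2*y*z) < 1"
proof -
  have d: "0 < 2*y*z" using assms by simp
  have "y^2+z^2-x^2 < 2*y*z"
  proof -
    have "(y-z-x)*(y-z+x) < 0" using assms by (intro mult_neg_pos) auto
    thus ?thesis by (simp add: algebra_simps power2_eq_square)
  qed
  thus lt: "(y^2+z^2-x^2)/(2*y*z) < 1" using d by simp
  have "-(2*y*z) < y^2+z^2-x^2"
  proof -
    have "(y+z-x)*(y+z+x) > 0" using assms by (intro mult_pos_pos) auto
    thus ?thesis by (simp add: algebra_simps power2_eq_square)
  qed
  thus gt: "-1 < (y^2+z^2-x^2)/(2*y*z)" using d by (simp add: field_simps)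
  show "cos (ang x y z) = (y^2+z^2-x^2)/(2*y*z)"
    unfolding ang_def using lt gt by (intro cos_arccos) auto
qed

definition PP :: "real \<Rightarrow> real \<Rightarrow> real \<Rightarrow> real" where
  "PP x y z = 2*x^2*y^2+2*y^2*z^2+2*z^2*x^2-x^4-y^4-z^4"

lemma PP_sym: "PP y z x = PP x y z" "PP z x y = PP x y z"
  unfolding PP_def by (simp_all add: algebra_simps)

lemma sin_ang:
  assumes "0<y" "0<z" "x < y+z" "y < z+x" "z < x+y" "0 < x"
  shows "sin (ang x y z) = sqrt (PP x y z)/(2*y*z)"
proof -
  note c = cos_ang[OF assms]
  have "sin (ang x y z) = sqrt (1 - ((y^2+z^2-x^2)/(2*y*z))^2)"
    unfolding ang_def using c(2,3) by (intro sin_arccos) auto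
  also have "1 - ((y^2+z^2-x^2)/(2*y*z))^2 = (4*y^2*z^2 - (y^2+z^2-x^2)^2) / (2*y*z)^2"
    using assms by (simp add: field_simps power2_eq_square)
  also have "4*y^2*z^2 - (y^2+z^2-x^2)^2 = PP x y z"
    unfolding PP_def by algebra
  also have "sqrt (PP x y z / (2*y*z)^2) = sqrt (PP x y z)/(2*y*z)"
    using assms by (simp add: real_sqrt_divide)
  finally show ?thesis .
qed

lemma ang_bounds:
  assumes "0<y" "0<z" "x < y+z" "y < z+x" "z < x+y" "0 < x" "x^2 < y^2+z^2"
  shows "0 < ang x y z" "ang x y z < pi/2" "0 < cos (ang x y z)"
proof -
  note c = cos_ang[OF assms(1-6)]
  have k: "0 < (y^2+z^2-x^2)/(2*y*z)" using assms by simp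
  show "0 < ang x y z" unfolding ang_def using c(2,3) arccos_lt_bounded by blast
  have "arccos ((y^2+z^2-x^2)/(2*y*z)) < arccos 0"
    using k c(3) by (intro arccos_less_arccos) auto
  thus "ang x y z < pi/2" unfolding ang_def by simp
  show "0 < cos (ang x y z)" using c(1) k by simp
qed

lemma ang_gt_pi4:
  assumes "0<y" "0<z" "x < y+z" "y < z+x" "z < x+y" "0 < x" "0 < y^2+z^2-x^2"
    and sq: "(y^2+z^2-x^2)^2 < 2*y^2*z^2"
  shows "pi/4 < ang x y z" "(cos (ang x y z))^2 < 1/2"
proof -
  note c = cos_ang[OF assms(1-6)]
  from sq have k2: "((y^2+z^2-x^2)/(2*y*z))^2 < 1/2"
    using assms by (simp add: field_simps power2_eq_square)
  thus "(cos (ang x y z))^2 < 1/2" using c(1) by simp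
  have "(y^2+z^2-x^2)/(2*y*z) < sqrt (1/2)" using k2 by (intro real_less_rsqrt)
  also have "sqrt (1/2) = cos (pi/4)" by (simp add: cos_45 real_sqrt_divide divide_simps)
  finally have "arccos (cos (pi/4)) < arccos ((y^2+z^2-x^2)/(2*y*z))"
    using c(2) by (intro arccos_less_arccos) auto
  thus "pi/4 < ang x y z" unfolding ang_def by (simp add: arccos_cos)
qed

lemma acute_facts:
  assumes "acute_abc a b c"
  shows "cos (ang a b c) = (b^2+c^2-a^2)/(2*b*c)"
    "cos (ang b c a) = (c^2+a^2-b^2)/(2*c*a)"
    "cos (ang c a b) = (a^2+b^2-c^2)/(2*a*b)"
    "0 < ang a b c" "ang a b c < pi/2" "0 < cos (ang a b c)"
    "0 < ang b c a" "ang b c a < pi/2" "0 < cos (ang b c a)"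
    "0 < ang c a b" "ang c a b < pi/2" "0 < cos (ang c a b)"
    "pi/4 < ang b c a" "(cos (ang b c a))^2 < 1/2"
    "pi/4 < ang c a b" "(cos (ang c a b))^2 < 1/2"
proof -
  have h: "0 < a" "0 < b" "0 < c" "a < b + c" "b < c + a" "c < a + b"
     "a^2 < b^2 + c^2" "b^2 < c^2 + a^2" "c^2 < a^2 + b^2" "a < b" "b < c"
    using assms unfolding acute_abc_def by auto
  have hA: "0<b" "0<c" "a < b+c" "b < c+a" "c < a+b" "0 < a" "a^2 < b^2+c^2" using h by auto
  have hB: "0<c" "0<a" "b < c+a" "c < a+b" "a < b+c" "0 < b" "b^2 < c^2+a^2" using h by auto
  have hC: "0<a" "0<b" "c < a+b" "a < b+c" "b < c+a" "0 < c" "c^2 < a^2+b^2" using h by auto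
  show "cos (ang a b c) = (b^2+c^2-a^2)/(2*b*c)" using cos_ang[OF hA(1-6)] by simp
  show "cos (ang b c a) = (c^2+a^2-b^2)/(2*c*a)" using cos_ang[OF hB(1-6)] by simp
  show "cos (ang c a b) = (a^2+b^2-c^2)/(2*a*b)" using cos_ang[OF hC(1-6)] by simp
  show "0 < ang a b c" "ang a b c < pi/2" "0 < cos (ang a b c)" using ang_bounds[OF hA] by auto
  show "0 < ang b c a" "ang b c a < pi/2" "0 < cos (ang b c a)" using ang_bounds[OF hB] by auto
  show "0 < ang c a b" "ang c a b < pi/2" "0 < cos (ang c a b)" using ang_bounds[OF hC] by auto
  have a2: "a^2 < b^2" "b^2 < c^2" using h by (auto intro: power_strict_mono)
  have "(c^2+a^2-b^2)*(c^2+a^2-b^2) < c^2 * (2*a^2)"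
    using h a2 by (intro mult_strict_mono) auto
  hence sB: "(c^2+a^2-b^2)^2 < 2*c^2*a^2" by (simp add: power2_eq_square algebra_simps)
  have "(a^2+b^2-c^2)*(a^2+b^2-c^2) < (2*a^2) * b^2"
    using h a2 by (intro mult_strict_mono) auto
  hence sC: "(a^2+b^2-c^2)^2 < 2*a^2*b^2" by (simp add: power2_eq_square algebra_simps)
  show "pi/4 < ang b c a" "(cos (ang b c a))^2 < 1/2"
    using ang_gt_pi4[OF hB(1-6) _ sB] h by auto
  show "pi/4 < ang c a b" "(cos (ang c a b))^2 < 1/2"
    using ang_gt_pi4[OF hC(1-6) _ sC] h by auto
qed

lemma nbC: "atrace_beyond_C f a b c \<longleftrightarrow> f b c a * (f b c a + f c a b) < 0"
  by (simp add: atrace_beyond_C_def Let_def)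

lemma ok1: "0 \<le> (q::real) \<Longrightarrow> 0 \<le> r \<Longrightarrow> \<not> q*(q+r) < 0"
  by (simp add: not_less)
lemma ok2: "0 \<le> (q::real) \<Longrightarrow> 0 \<le> q+r \<Longrightarrow> \<not> q*(q+r) < 0"
  by (simp add: not_less)
lemma ok3: "(q::real) \<le> 0 \<Longrightarrow> r \<le> 0 \<Longrightarrow> \<not> q*(q+r) < 0"
  by (simp add: not_less mult_nonpos_nonpos)

lemma acute_basic: assumes "acute_abc a b c"
  shows "0 < a" "0 < b" "0 < c" "a < b + c" "b < c + a" "c < a + b"
     "a^2 < b^2 + c^2" "b^2 < c^2 + a^2" "c^2 < a^2 + b^2" "a < b" "b < c"
  using assms unfolding acute_abc_def by auto

lemma X1_ok: assumes "acute_abc a b c" shows "\<not> atrace_beyond_C X1 a b c"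
  unfolding nbC X1_def using acute_basic[OF assms] by (intro ok1) (auto intro!: mult_nonneg_nonneg)
lemma X2_ok: assumes "acute_abc a b c" shows "\<not> atrace_beyond_C X2 a b c"
  unfolding nbC X2_def using acute_basic[OF assms] by (intro ok1) (auto intro!: mult_nonneg_nonneg)
lemma X3_ok: assumes "acute_abc a b c" shows "\<not> atrace_beyond_C X3 a b c"
  unfolding nbC X3_def using acute_basic[OF assms] by (intro ok1) (auto intro!: mult_nonneg_nonneg)
lemma X4_ok: assumes "acute_abc a b c" shows "\<not> atrace_beyond_C X4 a b c"
  unfolding nbC X4_def using acute_basic[OF assms] by (intro ok1) (auto intro!: mult_nonneg_nonneg)
lemma X6_ok: assumes "acute_abc a b c" shows "\<not> atrace_beyond_C X6 a b c"
  unfolding nbC X6_def using acute_basic[OF assms] by (intro ok1) (auto intro!: mult_nonneg_nonneg)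
lemma X7_ok: assumes "acute_abc a b c" shows "\<not> atrace_beyond_C X7 a b c"
  unfolding nbC X7_def using acute_basic[OF assms] by (intro ok1) (auto intro!: mult_nonneg_nonneg)
lemma X8_ok: assumes "acute_abc a b c" shows "\<not> atrace_beyond_C X8 a b c"
  unfolding nbC X8_def using acute_basic[OF assms] by (intro ok1) (auto intro!: mult_nonneg_nonneg)
lemma X9_ok: assumes "acute_abc a b c" shows "\<not> atrace_beyond_C X9 a b c"
  unfolding nbC X9_def using acute_basic[OF assms] by (intro ok1) (auto intro!: mult_nonneg_nonneg)
lemma X10_ok: assumes "acute_abc a b c" shows "\<not> atrace_beyond_C X10 a b c"
  unfolding nbC X10_def using acute_basic[OF assms] by (intro ok1) (auto intro!: mult_nonneg_nonneg)
lemma X11_ok: assumes "acute_abc a b c" shows "\<not> atrace_beyond_C X11 a b c"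
  unfolding nbC X11_def using acute_basic[OF assms] by (intro ok1) (auto intro!: mult_nonneg_nonneg)
lemma X12_ok: assumes "acute_abc a b c" shows "\<not> atrace_beyond_C X12 a b c"
  unfolding nbC X12_def using acute_basic[OF assms] by (intro ok1) (auto intro!: mult_nonneg_nonneg)

lemma X5_ok: assumes "acute_abc a b c" shows "\<not> atrace_beyond_C X5 a b c"
proof -
  note f = acute_facts[OF assms] and h = acute_basic[OF assms]
  have q: "0 < cos (ang c a b - ang a b c)" using f by (intro cos_gt_zero_pi) auto
  have r: "0 < cos (ang a b c - ang b c a)" using f by (intro cos_gt_zero_pi) auto
  show ?thesis unfolding nbC X5_def by (rule ok1) (use q r h f in \<open>auto intro!: mult_nonneg_nonneg\<close>)
qed

lemma X13_ok: assumes "acute_abc a b c" shows "\<not> atrace_beyond_C X13 a b c"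
proof -
  note f = acute_facts[OF assms] and h = acute_basic[OF assms]
  have q: "0 < sin (ang b c a + pi/3)" using f by (intro sin_gt_zero) auto
  have r: "0 < sin (ang c a b + pi/3)" using f by (intro sin_gt_zero) auto
  show ?thesis unfolding nbC X13_def by (rule ok1) (use q r h f in \<open>auto intro!: mult_nonneg_nonneg\<close>)
qed

lemma X15_ok: assumes "acute_abc a b c" shows "\<not> atrace_beyond_C X15 a b c"
proof -
  note f = acute_facts[OF assms] and h = acute_basic[OF assms]
  have q: "0 < sin (ang b c a + pi/3)" using f by (intro sin_gt_zero) auto
  have r: "0 < sin (ang c a b + pi/3)" using f by (intro sin_gt_zero) auto
  show ?thesis unfolding nbC X15_def by (rule ok1) (use q r h f in \<open>auto intro!: mult_nonneg_nonneg\<close>)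
qed

lemma X17_ok: assumes "acute_abc a b c" shows "\<not> atrace_beyond_C X17 a b c"
proof -
  note f = acute_facts[OF assms] and h = acute_basic[OF assms]
  have q: "0 < sin (ang b c a + pi/6)" using f by (intro sin_gt_zero) auto
  have r: "0 < sin (ang c a b + pi/6)" using f by (intro sin_gt_zero) auto
  show ?thesis unfolding nbC X17_def by (rule ok1) (use q r h f in \<open>auto intro!: mult_nonneg_nonneg\<close>)
qed

lemma X18_ok: assumes "acute_abc a b c" shows "\<not> atrace_beyond_C X18 a b c"
proof -
  note f = acute_facts[OF assms] and h = acute_basic[OF assms]
  have q: "0 < sin (ang b c a - pi/6)" using f by (intro sin_gt_zero) auto
  have r: "0 < sin (ang c a b - pi/6)" using f by (intro sin_gt_zero) auto
  show ?thesis unfolding nbC X18_def by (rule ok1) (use q r h f in \<open>auto intro!: mult_nonneg_nonneg\<close>)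
qed

lemma X19_ok: assumes "acute_abc a b c" shows "\<not> atrace_beyond_C X19 a b c"
proof -
  note f = acute_facts[OF assms] and h = acute_basic[OF assms]
  have q: "0 < tan (ang b c a)" using f by (intro tan_gt_zero) auto
  have r: "0 < tan (ang c a b)" using f by (intro tan_gt_zero) auto
  show ?thesis unfolding nbC X19_def by (rule ok1) (use q r h f in \<open>auto intro!: mult_nonneg_nonneg\<close>)
qed

lemma X21_ok: assumes "acute_abc a b c" shows "\<not> atrace_beyond_C X21 a b c"
proof -
  note f = acute_facts[OF assms] and h = acute_basic[OF assms]
  have q: "0 < cos (ang c a b) + cos (ang a b c)" using f by auto
  have r: "0 < cos (ang a b c) + cos (ang b c a)" using f by auto
  show ?thesis unfolding nbC X21_def by (rule ok1) (use q r h f in \<open>auto intro!: mult_nonneg_nonneg\<close>)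
qed

lemma X24_ok: assumes "acute_abc a b c" shows "\<not> atrace_beyond_C X24 a b c"
proof -
  note f = acute_facts[OF assms] and h = acute_basic[OF assms]
  have q: "cos (2 * ang b c a) < 0" using f by (simp add: cos_double_cos)
  have r: "cos (2 * ang c a b) < 0" using f by (simp add: cos_double_cos)
  have q': "b * cos (2 * ang b c a) / cos (ang b c a) \<le> 0"
    using mult_pos_neg[OF h(2) q] f(9) by (intro divide_nonpos_pos) auto
  have r': "c * cos (2 * ang c a b) / cos (ang c a b) \<le> 0"
    using mult_pos_neg[OF h(3) r] f(12) by (intro divide_nonpos_pos) auto
  show ?thesis unfolding nbC X24_def by (rule ok3[OF q' r'])
qed

lemma X25_ok: assumes "acute_abc a b c" shows "\<not> atrace_beyond_C X25 a b c"
proof -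
  note f = acute_facts[OF assms] and h = acute_basic[OF assms]
  have q: "0 < tan (ang b c a)" "0 < sin (ang b c a)" using f by (auto intro!: tan_gt_zero sin_gt_zero)
  have r: "0 < tan (ang c a b)" "0 < sin (ang c a b)" using f by (auto intro!: tan_gt_zero sin_gt_zero)
  show ?thesis unfolding nbC X25_def by (rule ok1) (use q r h f in \<open>auto intro!: mult_nonneg_nonneg\<close>)
qed

lemma X27_ok: assumes "acute_abc a b c" shows "\<not> atrace_beyond_C X27 a b c"
proof -
  note f = acute_facts[OF assms] and h = acute_basic[OF assms]
  have q: "0 < cos (ang b c a)" using f by auto
  have r: "0 < cos (ang c a b)" using f by auto
  show ?thesis unfolding nbC X27_def by (rule ok1) (use q r h f in \<open>auto intro!: mult_nonneg_nonneg\<close>)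
qed

lemma X28_ok: assumes "acute_abc a b c" shows "\<not> atrace_beyond_C X28 a b c"
proof -
  note f = acute_facts[OF assms] and h = acute_basic[OF assms]
  have q: "0 < tan (ang b c a)" using f by (intro tan_gt_zero) auto
  have r: "0 < tan (ang c a b)" using f by (intro tan_gt_zero) auto
  show ?thesis unfolding nbC X28_def by (rule ok1) (use q r h f in \<open>auto intro!: mult_nonneg_nonneg\<close>)
qed

lemma X29_ok: assumes "acute_abc a b c" shows "\<not> atrace_beyond_C X29 a b c"
proof -
  note f = acute_facts[OF assms] and h = acute_basic[OF assms]
  have q: "0 < cos (ang c a b) + cos (ang a b c)" "0 < cos (ang b c a)" using f by auto
  have r: "0 < cos (ang a b c) + cos (ang b c a)" "0 < cos (ang c a b)" using f by auto
  show ?thesis unfolding nbC X29_def by (rule ok1) (use q r h f in \<open>auto intro!: mult_nonneg_nonneg\<close>)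
qed

lemma X22_ok: assumes "acute_abc a b c" shows "\<not> atrace_beyond_C X22 a b c"
proof -
  note h = acute_basic[OF assms]
  have a2: "a^2 < b^2" "b^2 < c^2" using h by (auto intro: power_strict_mono)
  have "b^4 < c^4" using h by (auto intro: power_strict_mono)
  moreover have "0 \<le> a^4" by simp
  ultimately have "0 \<le> c^4 + a^4 - b^4" by linarith
  hence q: "0 \<le> b^2 * (c^4 + a^4 - b^4)" by simp
  have e: "b^2 * (c^4 + a^4 - b^4) + c^2 * (a^4 + b^4 - c^4)
      = (b^2+c^2)*((a^2-c^2+b^2)*(a^2+c^2-b^2))" by algebra
  have "0 < (b^2+c^2)*((a^2-c^2+b^2)*(a^2+c^2-b^2))"
    using h a2 by (intro mult_pos_pos) auto
  hence "0 \<le> b^2 * (c^4 + a^4 - b^4) + c^2 * (a^4 + b^4 - c^4)" using e by simp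
  thus ?thesis unfolding nbC X22_def using q by (intro ok2) auto
qed

lemma X20_ok: assumes "acute_abc a b c" shows "\<not> atrace_beyond_C X20 a b c"
proof -
  note f = acute_facts[OF assms] and h = acute_basic[OF assms]
  have a2: "a^2 < b^2" "b^2 < c^2" using h by (auto intro: power_strict_mono)
  define x where "x = a^2"
  define y where "y = b^2"
  define z where "z = c^2"
  have K: "0 < 4*a*b*c" using h by simp
  have eq: "X20 b c a = (2*y*(z+x-y) - (x+y-z)*(y+z-x)) / (4*a*b*c)"
    unfolding X20_def f(1-3) x_def y_def z_def using h by (simp add: field_simps power2_eq_square)
  have er: "X20 c a b = (2*z*(x+y-z) - (y+z-x)*(z+x-y)) / (4*a*b*c)"
    unfolding X20_def f(1-3) x_def y_def z_def using h by (simp add: field_simps power2_eq_square)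
  have xyz: "0 < x" "x < y" "y < z" "z < x + y" using h a2 unfolding x_def y_def z_def by auto
  have nq: "2*y*(z+x-y) - (x+y-z)*(y+z-x) = x^2 + 2*x*((z-x)-(y-x)) + ((z-x)-(y-x))*((z-x)+3*(y-x))"
    by algebra
  have "0 < x^2 + 2*x*((z-x)-(y-x)) + ((z-x)-(y-x))*((z-x)+3*(y-x))"
    using xyz by (intro add_pos_pos mult_pos_pos) auto
  hence q: "0 \<le> X20 b c a" unfolding eq nq using K by simp
  have ns: "(2*y*(z+x-y) - (x+y-z)*(y+z-x)) + (2*z*(x+y-z) - (y+z-x)*(z+x-y)) = 2*((x-z+y)*(x+z-y))"
    by algebra
  have "0 < 2*((x-z+y)*(x+z-y))" using xyz by (intro mult_pos_pos) auto
  hence "0 \<le> X20 b c a + X20 c a b" unfolding eq er add_divide_distrib[symmetric] ns using K by simp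
  thus ?thesis unfolding nbC using q by (intro ok2) auto
qed

lemma ok4: "(q::real) \<le> 0 \<Longrightarrow> q + r \<le> 0 \<Longrightarrow> \<not> q*(q+r) < 0"
  by (simp add: not_less mult_nonpos_nonpos)

lemma X14_ok: assumes "acute_abc a b c" shows "\<not> atrace_beyond_C X14 a b c"
proof -
  note f = acute_facts[OF assms] and h = acute_basic[OF assms]
  have a2: "a^2 < b^2" "b^2 < c^2" using h by (auto intro: power_strict_mono)
  define S where "S = sqrt (PP a b c)"
  define K where "K = 4*a*b*c"
  define u where "u = S - sqrt 3 * (c^2+a^2-b^2)"
  define v where "v = S - sqrt 3 * (a^2+b^2-c^2)"
  have K: "0 < K" unfolding K_def using h by simp
  have hB: "0<c" "0<a" "b < c+a" "c < a+b" "a < b+c" "0 < b" using h by auto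
  have hC: "0<a" "0<b" "c < a+b" "a < b+c" "b < c+a" "0 < c" using h by auto
  have sB: "sin (ang b c a) = S/(2*c*a)" using sin_ang[OF hB] PP_sym unfolding S_def by simp
  have sC: "sin (ang c a b) = S/(2*a*b)" using sin_ang[OF hC] PP_sym unfolding S_def by simp
  have sq: "sin (ang b c a - pi/3) = u / (4*c*a)"
    unfolding sin_diff sB f(2) cos_60 sin_60 u_def using h by (simp add: field_simps)
  have q: "X14 b c a = K / u" unfolding X14_def K_def sq by (simp add: algebra_simps)
  have sr: "sin (ang c a b - pi/3) = v / (4*a*b)"
    unfolding sin_diff sC f(3) cos_60 sin_60 v_def using h by (simp add: field_simps)
  have r: "X14 c a b = K / v" unfolding X14_def K_def sr by (simp add: algebra_simps)
  have PPe: "PP a b c = 4*a^2*b^2 - (a^2+b^2-c^2)^2" unfolding PP_def by algebra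
  have w: "0 < a^2+b^2-c^2" "a^2+b^2-c^2 < a^2" "a^2+b^2-c^2 < b^2" using h a2 by auto
  have "(a^2+b^2-c^2)*(a^2+b^2-c^2) < a^2*b^2" using w by (intro mult_strict_mono) auto
  hence W: "(a^2+b^2-c^2)^2 < a^2*b^2" by (simp add: power2_eq_square)
  have e3: "(sqrt 3 * (a^2+b^2-c^2))^2 = 3 * (a^2+b^2-c^2)^2" by (simp add: power_mult_distrib)
  have "(sqrt 3 * (a^2+b^2-c^2))^2 < PP a b c" unfolding PPe e3 using W by linarith
  hence "sqrt 3 * (a^2+b^2-c^2) < S" unfolding S_def by (rule real_less_rsqrt)
  hence v: "0 < v" unfolding v_def by simp
  define x where "x = a^2"
  define s where "s = b^2 - a^2"
  define t where "t = c^2 - a^2"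
  have st: "0 < x" "0 < s" "s < t" "t < x + s" using h a2 unfolding x_def s_def t_def by auto
  have PPx: "PP a b c - 3*x^2 = 2*x*s + 2*x*t + 2*s*t - s*s - t*t"
    unfolding PP_def x_def s_def t_def by algebra
  have "t*t < t*(x+s)" using st by (intro mult_strict_left_mono) auto
  hence i1: "t*t < t*x + t*s" by (simp add: algebra_simps)
  have "s*s < s*t" using st by (intro mult_strict_left_mono) auto
  moreover have "0 < x*s" "0 < x*t" using st by auto
  ultimately have "0 < 2*x*s + 2*x*t + 2*s*t - s*s - t*t" using i1 by (simp add: algebra_simps)
  hence "3*x^2 < PP a b c" using PPx by linarith
  moreover have "(sqrt 3 * a^2)^2 = 3*x^2" unfolding x_def by (simp add: power_mult_distrib)
  ultimately have "(sqrt 3 * a^2)^2 < PP a b c" by simp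
  hence "sqrt 3 * a^2 < S" unfolding S_def by (rule real_less_rsqrt)
  hence uv: "0 < u + v" unfolding u_def v_def by (simp add: algebra_simps)
  have "u < v" unfolding u_def v_def using a2 by simp
  have G: "\<not> (K/u * (K/u + K/v) < 0)"
  proof (cases "0 < u")
    case True thus ?thesis using K v by (intro ok1) auto
  next
    case False
    show ?thesis
    proof (cases "u = 0")
      case True thus ?thesis by simp
    next
      case False
      hence u: "u < 0" using \<open>\<not> 0 < u\<close> by simp
      have "K/v < K/(-u)" using u uv K mult_pos_neg[OF v u] by (intro divide_strict_left_mono) auto
      moreover have "K/(-u) = -(K/u)" by (rule divide_minus_right)
      ultimately have "K/u + K/v \<le> 0" by linarith
      moreover have "K/u \<le> 0" using divide_pos_neg[OF K u] by linarith
      ultimately show ?thesis by (intro ok4)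
    qed
  qed
  show ?thesis unfolding nbC q r by (rule G)
qed

lemma sqrt_lt: "0 \<le> y \<Longrightarrow> x < y^2 \<Longrightarrow> sqrt x < y"
  by (metis real_sqrt_abs real_sqrt_less_mono abs_of_nonneg)

lemma acute456: "acute_abc 4 5 6" by (simp add: acute_abc_def)

lemma cos456: "cos (ang 4 5 6) = 3/4" "cos (ang 5 6 4) = 9/16" "cos (ang 6 4 5) = 1/8"
  using cos_ang(1)[of 5 6 4] cos_ang(1)[of 6 4 5] cos_ang(1)[of 4 5 6] by simp_all

lemma sin456: "sin (ang 5 6 4) = sqrt 1575 / 48" "sin (ang 6 4 5) = sqrt 1575 / 40"
  using sin_ang[of 6 4 5] sin_ang[of 4 5 6] by (simp_all add: PP_def)

lemma X16_ex: "atrace_beyond_C X16 4 5 6"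
proof -
  have R: "39 < sqrt 1575" "sqrt 1575 < 40" by (auto intro!: real_less_rsqrt sqrt_lt)
  have T1: "17/10 < sqrt 3" by (rule real_less_rsqrt) (simp add: power2_eq_square)
  have T2: "sqrt 3 < 7/4" by (rule sqrt_lt) (simp_all add: power2_eq_square)
  note T = T1 T2
  have q: "X16 5 6 4 = 5 * (sqrt 1575 / 96 - 9 * sqrt 3 / 32)"
    unfolding X16_def sin_diff sin456 cos456 cos_60 sin_60 by simp
  have r: "X16 6 4 5 = 6 * (sqrt 1575 / 80 - sqrt 3 / 16)"
    unfolding X16_def sin_diff sin456 cos456 cos_60 sin_60 by simp
  have "X16 5 6 4 < 0" unfolding q using R T by simp
  moreover have "0 < X16 5 6 4 + X16 6 4 5" unfolding q r using R T by simp
  ultimately show ?thesis unfolding nbC by (simp add: mult_neg_pos)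
qed

lemma X23_ex: "atrace_beyond_C X23 4 5 6"
  unfolding nbC X23_def by simp

lemma X26_ex: "atrace_beyond_C X26 4 5 6"
  unfolding nbC X26_def cos_double_cos cos456 by (simp add: power2_eq_square)

theorem theorem6p10:
  shows "(\<forall>n \<in> {16, 23, 26}. \<exists>a b c. acute_abc a b c \<and> atrace_beyond_C (ETC n) a b c)
       \<and> (\<forall>n \<in> {1..29} - {16, 23, 26}. \<forall>a b c. acute_abc a b c \<longrightarrow> \<not> atrace_beyond_C (ETC n) a b c)"
proof
  show "\<forall>n \<in> {16, 23, 26}. \<exists>a b c. acute_abc a b c \<and> atrace_beyond_C (ETC n) a b c"
    using acute456 X16_ex X23_ex X26_ex by (auto simp: ETC_def)
  show "\<forall>n \<in> {1..29} - {16, 23, 26}. \<forall>a b c. acute_abc a b c \<longrightarrow> \<not> atrace_beyond_C (ETC n) a b c"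
  proof (intro ballI allI impI)
    fix n :: nat and a b c :: real
    assume n: "n \<in> {1..29} - {16, 23, 26}" and t: "acute_abc a b c"
    from n have "n \<in> {1,2,3,4,5,6,7,8,9,10,11,12,13,14,15,17,18,19,20,21,22,24,25,27,28,29}"
      by simp presburger
    thus "\<not> atrace_beyond_C (ETC n) a b c"
      using X1_ok[OF t] X2_ok[OF t] X3_ok[OF t] X4_ok[OF t] X5_ok[OF t] X6_ok[OF t] X7_ok[OF t]
        X8_ok[OF t] X9_ok[OF t] X10_ok[OF t] X11_ok[OF t] X12_ok[OF t] X13_ok[OF t] X14_ok[OF t]
        X15_ok[OF t] X17_ok[OF t] X18_ok[OF t] X19_ok[OF t] X20_ok[OF t] X21_ok[OF t]
        X22_ok[OF t] X24_ok[OF t] X25_ok[OF t] X27_ok[OF t] X28_ok[OF t] X29_ok[OF t]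
      by (auto simp: ETC_def)
  qed
qed

end
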